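(* Let $n\geq 3$ and let $o_1,o_2$ be two non-parallel $\mathcal{O}_n$-directions. Write $o_1=\alpha+\beta\zeta_n$ and $o_2=\gamma+\delta\zeta_n$ with $\alpha,\beta,\gamma,\delta\in\mathbb{Z}[\zeta_n+\bar\zeta_n]$. Let $G_{\{o_1,o_2\}}=\bigcap_{i=1}^2\bigcup_{t\in\mathcal{O}_n}(t+\mathbb{R}o_i)$ be the complete grid and let $M_{\{o_1,o_2\}}=\operatorname{lin}_{\mathbb{Z}[\zeta_n+\bar\zeta_n]}\left(\left\{\frac{1}{\alpha\delta-\beta\gamma}o_1,\frac{1}{\alpha\delta-\beta\gamma}o_2\right\}\right)$. Then $\mathcal{O}_n\subset G_{\{o_1,o_2\}}\subset\mathbb{C}$ and $G_{\{o_1,o_2\}}\subset M_{\{o_1,o_2\}}$.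
   Context: $\zeta_n$ is a primitive $n$th root of unity in $\mathbb{C}\cong\mathbb{R}^2$, $\bar\zeta_n$ its complex conjugate, $\mathcal{O}_n=\mathbb{Z}[\zeta_n]$. An $\mathcal{O}_n$-direction is an element of $\mathcal{O}_n\setminus\{0\}$. Every element of $\mathcal{O}_n$ can be written uniquely as $\varphi+\psi\zeta_n$ with $\varphi,\psi\in\mathbb{Z}[\zeta_n+\bar\zeta_n]$, so $\alpha,\beta,\gamma,\delta$ are uniquely determined, and $\alpha\delta-\beta\gamma\neq0$ since $o_1,o_2$ are non-parallel. $\operatorname{lin}_R(S)$ denotes the set of $R$-linear combinations of elements of $S$. *)

theory Defs
  imports Complex_Main
begin

definition primitive_root_of_unity :: "nat \<Rightarrow> complex \<Rightarrow> bool" where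
  "primitive_root_of_unity n z \<longleftrightarrow> z ^ n = 1 \<and> (\<forall>k. 0 < k \<and> k < n \<longrightarrow> z ^ k \<noteq> 1)"

definition zring :: "complex \<Rightarrow> complex set" where
  "zring x = {(\<Sum>i\<le>N. of_int (c i) * x ^ i) | (c :: nat \<Rightarrow> int) N. True}"

abbreviation cyc_ring :: "complex \<Rightarrow> complex set" where
  "cyc_ring \<zeta> \<equiv> zring \<zeta>"

abbreviation real_cyc_ring :: "complex \<Rightarrow> complex set" where
  "real_cyc_ring \<zeta> \<equiv> zring (\<zeta> + cnj \<zeta>)"

definition direction :: "complex \<Rightarrow> complex \<Rightarrow> bool" where
  "direction \<zeta> u \<longleftrightarrow> u \<in> cyc_ring \<zeta> \<and> u \<noteq> 0"

definition parallel :: "complex \<Rightarrow> complex \<Rightarrow> bool" where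
  "parallel u v \<longleftrightarrow> (\<exists>r::real. u = of_real r * v \<or> v = of_real r * u)"

definition complete_grid :: "complex \<Rightarrow> complex set \<Rightarrow> complex set" where
  "complete_grid \<zeta> D = (\<Inter>d\<in>D. \<Union>t\<in>cyc_ring \<zeta>. {t + of_real r * d | r::real. True})"

definition lin_over :: "complex set \<Rightarrow> complex set \<Rightarrow> complex set" where
  "lin_over R S = {(\<Sum>s\<in>F. a s * s) | F a. finite F \<and> F \<subseteq> S \<and> (\<forall>s\<in>F. a s \<in> R)}"

end

theory Submission
  imports Defs
begin

lemma zring_minimal:
  assumes ints: "\<And>k. of_int k \<in> S" and xS: "x \<in> S"
    and add: "\<And>u v. u \<in> S \<Longrightarrow> v \<in> S \<Longrightarrow> u + v \<in> S"
    and mul: "\<And>u v. u \<in> S \<Longrightarrow> v \<in> S \<Longrightarrow> u * v \<in> S"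
  shows "zring x \<subseteq> S"
proof
  fix z assume "z \<in> zring x"
  then obtain c N where z: "z = (\<Sum>i\<le>N. of_int (c i) * x ^ i)" unfolding zring_def by blast
  have pw: "x ^ i \<in> S" for i
  proof (induction i)
    case 0 show ?case using ints[of 1] by simp
  next
    case (Suc i) then show ?case using mul xS by simp
  qed
  have "(\<Sum>i\<le>M. of_int (c i) * x ^ i) \<in> S" for M
  proof (induction M)
    case 0 show ?case using ints by simp
  next
    case (Suc M) show ?case by (simp only: sum.atMost_Suc) (rule add[OF Suc mul[OF ints pw]])
  qed
  then show "z \<in> S" using z by simp
qed

lemma zringI: "z = (\<Sum>i\<le>N. of_int (c i) * x ^ i) \<Longrightarrow> z \<in> zring x"
  unfolding zring_def by blast

lemma zring_int: "of_int k \<in> zring x"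
  unfolding zring_def
  by (rule CollectI, rule exI[of _ "\<lambda>i. k"], rule exI[of _ 0], simp)

lemma zring_x: "x \<in> zring x"
  unfolding zring_def
  by (rule CollectI, rule exI[of _ "\<lambda>i. if i = 1 then 1 else 0"], rule exI[of _ 1], simp)

lemma zring_add:
  assumes "u \<in> zring x" "v \<in> zring x" shows "u + v \<in> zring x"
proof -
  obtain c N where u: "u = (\<Sum>i\<le>N. of_int (c i) * x ^ i)" using assms(1) unfolding zring_def by blast
  obtain d M where v: "v = (\<Sum>i\<le>M. of_int (d i) * x ^ i)" using assms(2) unfolding zring_def by blast
  define K where "K = N + M"
  define c' where "c' i = (if i \<le> N then c i else 0)" for i
  define d' where "d' i = (if i \<le> M then d i else 0)" for i
  have e1: "(\<Sum>i\<le>K. of_int (c' i) * x ^ i) = u"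
  proof -
    have "(\<Sum>i\<le>K. of_int (c' i) * x ^ i) = (\<Sum>i\<le>K. if i \<le> N then of_int (c i) * x ^ i else 0)"
      by (rule sum.cong) (auto simp: c'_def)
    also have "\<dots> = (\<Sum>i\<in>{i\<in>{..K}. i \<le> N}. of_int (c i) * x ^ i)"
      by (rule sum.inter_filter[symmetric]) simp
    also have "{i\<in>{..K}. i \<le> N} = {..N}" by (auto simp: K_def)
    finally show ?thesis using u by simp
  qed
  have e2: "(\<Sum>i\<le>K. of_int (d' i) * x ^ i) = v"
  proof -
    have "(\<Sum>i\<le>K. of_int (d' i) * x ^ i) = (\<Sum>i\<le>K. if i \<le> M then of_int (d i) * x ^ i else 0)"
      by (rule sum.cong) (auto simp: d'_def)
    also have "\<dots> = (\<Sum>i\<in>{i\<in>{..K}. i \<le> M}. of_int (d i) * x ^ i)"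
      by (rule sum.inter_filter[symmetric]) simp
    also have "{i\<in>{..K}. i \<le> M} = {..M}" by (auto simp: K_def)
    finally show ?thesis using v by simp
  qed
  have "u + v = (\<Sum>i\<le>K. of_int (c' i + d' i) * x ^ i)"
    using e1 e2 by (simp add: sum.distrib distrib_right)
  then show ?thesis by (rule zringI[where c="\<lambda>i. c' i + d' i"])
qed

lemma zring_scale:
  assumes "u \<in> zring x" shows "of_int k * u \<in> zring x"
proof -
  obtain c N where u: "u = (\<Sum>i\<le>N. of_int (c i) * x ^ i)" using assms(1) unfolding zring_def by blast
  have "of_int k * u = (\<Sum>i\<le>N. of_int (k * c i) * x ^ i)"
    using u by (simp add: sum_distrib_left mult.assoc)
  then show ?thesis by (rule zringI[where c="\<lambda>i. k * c i"])
qed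

lemma zring_shift:
  assumes "u \<in> zring x" shows "x * u \<in> zring x"
proof -
  obtain c N where u: "u = (\<Sum>i\<le>N. of_int (c i) * x ^ i)" using assms(1) unfolding zring_def by blast
  define c' where "c' i = (if i = 0 then 0 else c (i - 1))" for i
  have "(\<Sum>i\<le>Suc N. of_int (c' i) * x ^ i) = of_int (c' 0) * x ^ 0 + (\<Sum>i\<le>N. of_int (c' (Suc i)) * x ^ Suc i)"
    by (rule sum.atMost_Suc_shift)
  also have "\<dots> = x * u" using u by (simp add: c'_def sum_distrib_left mult_ac)
  finally have "x * u = (\<Sum>i\<le>Suc N. of_int (c' i) * x ^ i)" by simp
  then show ?thesis unfolding zring_def by blast
qed

lemma zring_mult:
  assumes "u \<in> zring x" "v \<in> zring x" shows "u * v \<in> zring x"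
proof -
  let ?S = "{w. \<forall>v\<in>zring x. w * v \<in> zring x}"
  have "zring x \<subseteq> ?S"
  proof (rule zring_minimal)
    show "of_int k \<in> ?S" for k using zring_scale by blast
    show "x \<in> ?S" using zring_shift by blast
    show "u + v \<in> ?S" if "u \<in> ?S" "v \<in> ?S" for u v
      using that zring_add by (auto simp: distrib_right)
    show "u * v \<in> ?S" if "u \<in> ?S" "v \<in> ?S" for u v
      using that by (auto simp: mult.assoc)
  qed
  then show ?thesis using assms by blast
qed

lemma zring_diff:
  assumes "u \<in> zring x" "v \<in> zring x" shows "u - v \<in> zring x"
  using zring_add[OF assms(1) zring_scale[OF assms(2), of "-1"]] by simp

lemma zring_real: assumes "x \<in> \<real>" shows "zring x \<subseteq> \<real>"
  by (rule zring_minimal) (auto simp: assms)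

theorem proposition5p2:
  fixes n :: nat and \<zeta> o\<^sub>1 o\<^sub>2 \<alpha> \<beta> \<gamma> \<delta> :: complex
  assumes "n \<ge> 3"
    and "primitive_root_of_unity n \<zeta>"
    and "direction \<zeta> o\<^sub>1" and "direction \<zeta> o\<^sub>2"
    and "\<not> parallel o\<^sub>1 o\<^sub>2"
    and "\<alpha> \<in> real_cyc_ring \<zeta>" "\<beta> \<in> real_cyc_ring \<zeta>"
    and "\<gamma> \<in> real_cyc_ring \<zeta>" "\<delta> \<in> real_cyc_ring \<zeta>"
    and "o\<^sub>1 = \<alpha> + \<beta> * \<zeta>" and "o\<^sub>2 = \<gamma> + \<delta> * \<zeta>"
  shows "cyc_ring \<zeta> \<subseteq> complete_grid \<zeta> {o\<^sub>1, o\<^sub>2}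
    \<and> complete_grid \<zeta> {o\<^sub>1, o\<^sub>2} \<subseteq> (UNIV :: complex set)
    \<and> complete_grid \<zeta> {o\<^sub>1, o\<^sub>2} \<subseteq>
        lin_over (real_cyc_ring \<zeta>)
          {o\<^sub>1 / (\<alpha> * \<delta> - \<beta> * \<gamma>), o\<^sub>2 / (\<alpha> * \<delta> - \<beta> * \<gamma>)}"
proof -
  define s where "s = \<zeta> + cnj \<zeta>"
  define R where "R = zring s"
  have sreal: "s \<in> \<real>" unfolding s_def
    by (metis Reals_cnj_iff complex_cnj_add complex_cnj_cnj add.commute)
  have Rreal: "R \<subseteq> \<real>" unfolding R_def using zring_real[OF sreal] .
  have pn: "\<zeta> ^ n = 1" and pk: "\<And>k. 0 < k \<Longrightarrow> k < n \<Longrightarrow> \<zeta> ^ k \<noteq> 1"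
    using assms(2) unfolding primitive_root_of_unity_def by auto
  have norm1: "norm \<zeta> = 1"
  proof -
    have "norm \<zeta> ^ n = 1" using pn by (metis norm_one norm_power)
    then show ?thesis using assms(1) power_eq_iff_eq_base[of n "norm \<zeta>" 1] by simp
  qed
  have zc: "\<zeta> * cnj \<zeta> = 1"
    using complex_norm_square[of \<zeta>] norm1 by simp
  have z2: "\<zeta> ^ 2 = s * \<zeta> - 1"
    unfolding s_def using zc by (simp add: power2_eq_square algebra_simps)
  have imz: "Im \<zeta> \<noteq> 0"
  proof
    assume "Im \<zeta> = 0"
    then have "\<zeta> = of_real (Re \<zeta>)" by (simp add: complex_eq_iff)
    moreover have "\<bar>Re \<zeta>\<bar> = 1" using norm1 \<open>Im \<zeta> = 0\<close> by (simp add: norm_complex_def)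
    ultimately have "\<zeta> ^ 2 = 1"
      by (metis abs_minus_cancel abs_one abs_power2 of_real_1 of_real_power power2_abs power_one)
    then show False using pk[of 2] assms(1) by simp
  qed
  have indep: "a = 0 \<and> b = 0" if h: "a \<in> \<real>" "b \<in> \<real>" "a + b * \<zeta> = 0" for a b
  proof -
    obtain a' b' where ab: "a = of_real a'" "b = of_real b'" using h(1,2) by (auto elim!: Reals_cases)
    have "Im (a + b * \<zeta>) = b' * Im \<zeta>" "Re (a + b * \<zeta>) = a' + b' * Re \<zeta>" using ab by simp_all
    then show ?thesis using h(3) imz ab by (auto simp: complex_eq_iff)
  qed
  have Rint: "of_int k \<in> R" for k unfolding R_def by (rule zring_int)
  have Rs: "s \<in> R" unfolding R_def by (rule zring_x)
  have Radd: "u + v \<in> R" if "u \<in> R" "v \<in> R" for u v using that zring_add unfolding R_def by blast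
  have Rmul: "u * v \<in> R" if "u \<in> R" "v \<in> R" for u v using that zring_mult unfolding R_def by blast
  have Rdiff: "u - v \<in> R" if "u \<in> R" "v \<in> R" for u v using that zring_diff unfolding R_def by blast
  let ?T = "{a + b * \<zeta> | a b. a \<in> R \<and> b \<in> R}"
  have decomp: "cyc_ring \<zeta> \<subseteq> ?T"
  proof (rule zring_minimal)
    show "of_int k \<in> ?T" for k
      by (rule CollectI, rule exI[of _ "of_int k"], rule exI[of _ 0]) (simp add: Rint Rint[of 0, simplified])
    show "\<zeta> \<in> ?T"
      by (rule CollectI, rule exI[of _ 0], rule exI[of _ 1]) (use Rint[of 0] Rint[of 1] in simp)
    show "u + v \<in> ?T" if hh: "u \<in> ?T" "v \<in> ?T" for u v
    proof -
      obtain a b c d where "u = a + b * \<zeta>" "v = c + d * \<zeta>" "a \<in> R" "b \<in> R" "c \<in> R" "d \<in> R"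
        using hh by blast
      then show ?thesis
        by (intro CollectI exI[of _ "a + c"] exI[of _ "b + d"]) (auto simp: Radd algebra_simps)
    qed
    show "u * v \<in> ?T" if hh: "u \<in> ?T" "v \<in> ?T" for u v
    proof -
      obtain a b c d where uv: "u = a + b * \<zeta>" "v = c + d * \<zeta>" and R: "a \<in> R" "b \<in> R" "c \<in> R" "d \<in> R"
        using hh by blast
      have "u * v = (a * c - b * d) + (a * d + b * c + b * d * s) * \<zeta>"
      proof -
        have "\<zeta> * \<zeta> = s * \<zeta> - 1" using z2 by (simp add: power2_eq_square)
        then have "u * v = a * c + (a * d + b * c) * \<zeta> + b * d * (\<zeta> * \<zeta>)"
          using uv by (simp add: algebra_simps)
        also have "\<dots> = (a * c - b * d) + (a * d + b * c + b * d * s) * \<zeta>"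
          by (simp only: \<open>\<zeta> * \<zeta> = s * \<zeta> - 1\<close>) (simp add: algebra_simps)
        finally show ?thesis .
      qed
      moreover have "a * c - b * d \<in> R" "a * d + b * c + b * d * s \<in> R"
        using R Rs by (auto intro!: Radd Rmul Rdiff)
      ultimately show ?thesis by blast
    qed
  qed
  have o1ne: "o\<^sub>1 \<noteq> 0" using assms(3) unfolding direction_def by simp
  have aR: "\<alpha> \<in> R" "\<beta> \<in> R" "\<gamma> \<in> R" "\<delta> \<in> R" using assms(6-9) unfolding R_def s_def by auto
  have areal: "\<alpha> \<in> \<real>" "\<beta> \<in> \<real>" "\<gamma> \<in> \<real>" "\<delta> \<in> \<real>" using aR Rreal by auto
  define D where "D = \<alpha> * \<delta> - \<beta> * \<gamma>"
  have Dne: "D \<noteq> 0"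
  proof
    assume D0: "D = 0"
    show False
    proof (cases "\<alpha> = 0")
      case False
      have "\<gamma> / \<alpha> \<in> \<real>" using areal by simp
      then obtain r where r: "\<gamma> / \<alpha> = of_real r" by (auto elim!: Reals_cases)
      have bg: "\<beta> * \<gamma> / \<alpha> = \<delta>" using D0 False unfolding D_def by (simp add: field_simps)
      have "of_real r * o\<^sub>1 = \<gamma> + (\<beta> * \<gamma> / \<alpha>) * \<zeta>"
        unfolding r[symmetric] assms(10) using False by (simp add: field_simps)
      then have "o\<^sub>2 = of_real r * o\<^sub>1" unfolding bg assms(11) by simp
      then show False using assms(5) unfolding parallel_def by blast
    next
      case True
      then have b0: "\<beta> \<noteq> 0" using o1ne assms(10) by simp
      then have g0: "\<gamma> = 0" using D0 True unfolding D_def by simp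
      have "\<delta> / \<beta> \<in> \<real>" using areal by simp
      then obtain r where r: "\<delta> / \<beta> = of_real r" by (auto elim!: Reals_cases)
      have "o\<^sub>2 = of_real r * o\<^sub>1"
        unfolding r[symmetric] assms(10,11) using True g0 b0 by simp
      then show False using assms(5) unfolding parallel_def by blast
    qed
  qed
  have o12: "o\<^sub>1 \<noteq> o\<^sub>2" using assms(5) unfolding parallel_def by (metis mult_1 of_real_1)
  have part1: "cyc_ring \<zeta> \<subseteq> complete_grid \<zeta> {o\<^sub>1, o\<^sub>2}"
  proof
    fix t assume t: "t \<in> cyc_ring \<zeta>"
    have "t \<in> (\<Union>u\<in>cyc_ring \<zeta>. {u + of_real r * d | r::real. True})" for d
      by (rule UN_I[OF t]) (rule CollectI, rule exI[of _ 0], simp)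
    then show "t \<in> complete_grid \<zeta> {o\<^sub>1, o\<^sub>2}" unfolding complete_grid_def by blast
  qed
  have part3: "complete_grid \<zeta> {o\<^sub>1, o\<^sub>2} \<subseteq> lin_over R {o\<^sub>1 / D, o\<^sub>2 / D}"
  proof
    fix z assume zg: "z \<in> complete_grid \<zeta> {o\<^sub>1, o\<^sub>2}"
    have g1: "z \<in> (\<Union>t\<in>cyc_ring \<zeta>. {t + of_real r * o\<^sub>1 | r::real. True})"
      and g2: "z \<in> (\<Union>t\<in>cyc_ring \<zeta>. {t + of_real r * o\<^sub>2 | r::real. True})"
      using zg unfolding complete_grid_def by simp_all
    from g1 obtain t1 r1 where t1: "t1 \<in> cyc_ring \<zeta>" and z1: "z = t1 + of_real r1 * o\<^sub>1"
      by blast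
    from g2 obtain t2 r2 where t2: "t2 \<in> cyc_ring \<zeta>" and z2': "z = t2 + of_real r2 * o\<^sub>2"
      by blast
    obtain a b where ab: "t1 = a + b * \<zeta>" "a \<in> R" "b \<in> R" using t1 decomp by blast
    obtain a2 b2 where ab2: "t2 = a2 + b2 * \<zeta>" "a2 \<in> R" "b2 \<in> R" using t2 decomp by blast
    define \<phi> where "\<phi> = a - a2"
    define \<psi> where "\<psi> = b - b2"
    have eq0: "(\<phi> + of_real r1 * \<alpha> - of_real r2 * \<gamma>) + (\<psi> + of_real r1 * \<beta> - of_real r2 * \<delta>) * \<zeta> = 0"
      using z1 z2' ab(1) ab2(1) assms(10,11) unfolding \<phi>_def \<psi>_def by (simp add: algebra_simps)
    have "\<phi> + of_real r1 * \<alpha> - of_real r2 * \<gamma> \<in> \<real>" "\<psi> + of_real r1 * \<beta> - of_real r2 * \<delta> \<in> \<real>"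
    proof -
      have rr: "a \<in> \<real>" "a2 \<in> \<real>" "b \<in> \<real>" "b2 \<in> \<real>" using ab ab2 Rreal by auto
      show "\<phi> + of_real r1 * \<alpha> - of_real r2 * \<gamma> \<in> \<real>" "\<psi> + of_real r1 * \<beta> - of_real r2 * \<delta> \<in> \<real>"
        unfolding \<phi>_def \<psi>_def by (intro Reals_diff Reals_add Reals_mult Reals_of_real areal rr)+
    qed
    from indep[OF this eq0] have e1: "\<phi> = of_real r2 * \<gamma> - of_real r1 * \<alpha>"
      and e2: "\<psi> = of_real r2 * \<delta> - of_real r1 * \<beta>" by (simp_all add: algebra_simps)
    have r1D: "of_real r1 * D = \<gamma> * \<psi> - \<phi> * \<delta>"
      unfolding D_def e1 e2 by (simp add: algebra_simps)
    define x where "x = a * \<delta> - \<gamma> * b + \<gamma> * \<psi> - \<phi> * \<delta>"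
    define y where "y = \<alpha> * b - \<beta> * a"
    have xR: "x \<in> R" unfolding x_def \<phi>_def \<psi>_def using aR ab ab2
      by (intro Radd Rdiff Rmul) auto
    have yR: "y \<in> R" unfolding y_def using aR ab by (intro Rdiff Rmul) auto
    have "x * o\<^sub>1 + y * o\<^sub>2 = D * z"
    proof -
      have "D * z = D * t1 + (of_real r1 * D) * o\<^sub>1" using z1 by (simp add: algebra_simps)
      also have "\<dots> = x * o\<^sub>1 + y * o\<^sub>2"
        by (simp only: r1D) (simp add: x_def y_def ab(1) assms(10,11) D_def algebra_simps)
      finally show ?thesis by simp
    qed
    then have zz: "z = x * (o\<^sub>1 / D) + y * (o\<^sub>2 / D)" using Dne by (simp add: field_simps)
    have neq: "o\<^sub>1 / D \<noteq> o\<^sub>2 / D" using o12 Dne by simp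
    define f where "f w = (if w = o\<^sub>1 / D then x else y)" for w
    have "(\<Sum>w\<in>{o\<^sub>1 / D, o\<^sub>2 / D}. f w * w) = z" using neq zz o12 by (simp add: f_def)
    moreover have "\<forall>w\<in>{o\<^sub>1 / D, o\<^sub>2 / D}. f w \<in> R" using xR yR o12 Dne by (simp add: f_def)
    ultimately show "z \<in> lin_over R {o\<^sub>1 / D, o\<^sub>2 / D}"
      unfolding lin_over_def by blast
  qed
  show ?thesis using part1 part3 unfolding R_def s_def D_def by simp
qed

end
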